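(* Let $T$ be a tree on $n\ge3$ vertices with distance matrix $M$, and let $C=M\left(\frac{2}{n}J_n-I_n\right)$. Then $C$ is positive definite in the sense that $\mathbf{x}^TC\mathbf{x}>0$ for every nonzero $\mathbf{x}\in\mathbb{R}^n$.
   Context: The distance matrix $M$ of $T$ is the $n\times n$ matrix whose $(i,j)$ entry is the number of edges on the path between vertices $i$ and $j$ of $T$. $J_n$ is the $n\times n$ all-ones matrix and $I_n$ the identity matrix. $C$ need not be symmetric. *)

theory Defs
  imports "HOL-Analysis.Analysis"
begin

definition is_walk :: "('a \<Rightarrow> 'a \<Rightarrow> bool) \<Rightarrow> 'a list \<Rightarrow> bool" where
  "is_walk E xs \<longleftrightarrow> xs \<noteq> [] \<and> (\<forall>i. Suc i < length xs \<longrightarrow> E (xs ! i) (xs ! Suc i))"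

definition is_cycle :: "('a \<Rightarrow> 'a \<Rightarrow> bool) \<Rightarrow> 'a list \<Rightarrow> bool" where
  "is_cycle E xs \<longleftrightarrow> is_walk E xs \<and> distinct xs \<and> length xs \<ge> 3 \<and> E (last xs) (hd xs)"

definition is_tree :: "('a::finite \<Rightarrow> 'a \<Rightarrow> bool) \<Rightarrow> bool" where
  "is_tree E \<longleftrightarrow> (\<forall>u v. E u v \<longrightarrow> E v u) \<and> (\<forall>u. \<not> E u u)
     \<and> (\<forall>u v. \<exists>xs. is_walk E xs \<and> hd xs = u \<and> last xs = v)
     \<and> (\<nexists>xs. is_cycle E xs)"

definition graph_dist :: "('a \<Rightarrow> 'a \<Rightarrow> bool) \<Rightarrow> 'a \<Rightarrow> 'a \<Rightarrow> nat" where
  "graph_dist E u v = (LEAST k. \<exists>xs. is_walk E xs \<and> hd xs = u \<and> last xs = v \<and> length xs = Suc k)"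

definition distance_matrix :: "('n::finite \<Rightarrow> 'n \<Rightarrow> bool) \<Rightarrow> real^'n^'n" where
  "distance_matrix E = (\<chi> i j. real (graph_dist E i j))"

definition all_ones :: "real^'n^'n" where
  "all_ones = (\<chi> i j. 1)"

end

theory Submission
  imports Defs
begin
lemma walk_Nil[simp]: "\<not> is_walk E []" by (simp add: is_walk_def)
lemma walk_single[simp]: "is_walk E [x]" by (simp add: is_walk_def)
lemma walk_Cons2[simp]: "is_walk E (x # y # xs) \<longleftrightarrow> E x y \<and> is_walk E (y # xs)"
  unfolding is_walk_def
  by (auto simp: nth_Cons split: nat.splits)

lemma walk_Cons: "is_walk E (x # xs) \<Longrightarrow> xs \<noteq> [] \<Longrightarrow> is_walk E xs"
  by (cases xs) auto

lemma walk_append: "is_walk E xs \<Longrightarrow> is_walk E ys \<Longrightarrow> E (last xs) (hd ys) \<Longrightarrow> is_walk E (xs @ ys)"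
proof (induction xs)
  case Nil then show ?case by simp
next
  case (Cons x xs)
  show ?case
  proof (cases xs)
    case Nil then show ?thesis using Cons by (cases ys) auto
  next
    case (Cons y zs) then show ?thesis using Cons.prems Cons.IH by auto
  qed
qed

lemma walk_append_shared: assumes a: "is_walk E xs" "is_walk E ys" "last xs = hd ys" shows "is_walk E (xs @ tl ys)"
proof (cases "tl ys")
  case Nil then show ?thesis using a by simp
next
  case (Cons b bs)
  have "ys = hd ys # b # bs" using Cons a(2) by (cases ys) auto
  then have "E (hd ys) b" "is_walk E (b # bs)" using a(2) by (metis walk_Cons2)+
  then show ?thesis using a Cons walk_append by fastforce
qed

lemma walk_rev: "(\<forall>u v. E u v \<longrightarrow> E v u) \<Longrightarrow> is_walk E xs \<Longrightarrow> is_walk E (rev xs)"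
proof (induction xs)
  case Nil then show ?case by simp
next
  case (Cons x xs)
  show ?case
  proof (cases xs)
    case Nil then show ?thesis by simp
  next
    case (Cons y zs)
    then have "E x y" "is_walk E xs" using Cons.prems by auto
    then show ?thesis using Cons.IH Cons.prems Cons walk_append[of E "rev xs" "[x]"] by auto
  qed
qed

lemma walk_drop: "is_walk E xs \<Longrightarrow> p < length xs \<Longrightarrow> is_walk E (drop p xs)"
proof (induction xs arbitrary: p)
  case Nil then show ?case by simp
next
  case (Cons x xs)
  then show ?case
    by (cases p) (auto, metis walk_Cons list.size(3) not_less0)
qed

lemma walk_short: "is_walk E xs \<Longrightarrow> \<exists>zs. is_walk E zs \<and> distinct zs \<and> hd zs = hd xs \<and> last zs = last xs \<and> set zs \<subseteq> set xs"
proof (induction xs)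
  case Nil then show ?case by simp
next
  case (Cons x xs)
  show ?case
  proof (cases xs)
    case Nil then show ?thesis by (intro exI[of _ "[x]"]) auto
  next
    case (Cons y ys)
    then have exy: "E x y" and wxs: "is_walk E xs" using Cons.prems by auto
    from Cons.IH[OF wxs] obtain zs where zs: "is_walk E zs" "distinct zs" "hd zs = hd xs" "last zs = last xs" "set zs \<subseteq> set xs" by blast
    show ?thesis
    proof (cases "x \<in> set zs")
      case True
      then obtain as bs where ab: "zs = as @ x # bs" by (meson split_list)
      have "is_walk E (x # bs)" using walk_drop[OF zs(1), of "length as"] ab by simp
      moreover have "distinct (x # bs)" using zs(2) ab by simp
      moreover have "last (x # bs) = last (x # xs)" using zs(4) ab Cons by (cases bs) auto
      moreover have "set (x # bs) \<subseteq> set (x # xs)" using zs(5) ab by auto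
      ultimately show ?thesis by (intro exI[of _ "x # bs"]) auto
    next
      case False
      have zne: "zs \<noteq> []" using zs(1) by (cases zs) auto
      then have "zs = hd zs # tl zs" by simp
      then have "is_walk E (x # zs)" using zs(1,3) exy Cons
        by (metis list.sel(1) walk_Cons2)
      moreover have "distinct (x # zs)" using zs(2) False by simp
      moreover have "last (x # zs) = last (x # xs)" using zs(4) zne Cons by simp
      moreover have "set (x # zs) \<subseteq> set (x # xs)" using zs(5) by auto
      ultimately show ?thesis by (intro exI[of _ "x # zs"]) auto
    qed
  qed
qed

locale tr =
  fixes E :: "'a \<Rightarrow> 'a \<Rightarrow> bool"
  assumes sym: "\<And>u v. E u v \<Longrightarrow> E v u"
    and irr: "\<And>u. \<not> E u u"
    and conn: "\<And>u v. \<exists>xs. is_walk E xs \<and> hd xs = u \<and> last xs = v"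
    and acyc: "\<nexists>xs. is_cycle E xs"
begin

abbreviation "d \<equiv> graph_dist E"

lemma dist_walk: "\<exists>xs. is_walk E xs \<and> hd xs = u \<and> last xs = v \<and> length xs = Suc (d u v)"
proof -
  obtain xs where xs: "is_walk E xs" "hd xs = u" "last xs = v" using conn by blast
  then have "length xs = Suc (length xs - 1)" by (cases xs) auto
  then have "\<exists>k xs. is_walk E xs \<and> hd xs = u \<and> last xs = v \<and> length xs = Suc k" using xs by blast
  then show ?thesis unfolding graph_dist_def by (rule LeastI_ex)
qed

lemma dist_le: "is_walk E xs \<Longrightarrow> hd xs = u \<Longrightarrow> last xs = v \<Longrightarrow> d u v \<le> length xs - 1"
  unfolding graph_dist_def
  by (rule Least_le) (cases xs, auto)

lemma dist_self[simp]: "d u u = 0"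
  using dist_le[of "[u]" u u] by simp

lemma dist_zero: "d u v = 0 \<Longrightarrow> u = v"
  using dist_walk[of u v] by (auto simp: length_Suc_conv)

lemma dist_sym: "d u v = d v u"
proof -
  have "d a b \<le> d b a" for a b
  proof -
    obtain xs where xs: "is_walk E xs" "hd xs = b" "last xs = a" "length xs = Suc (d b a)" using dist_walk by blast
    have "is_walk E (rev xs)" using walk_rev[OF _ xs(1)] sym by blast
    moreover have "xs \<noteq> []" using xs(1) by auto
    ultimately show ?thesis using dist_le[of "rev xs" a b] xs by (simp add: hd_rev last_rev)
  qed
  then show ?thesis by (metis le_antisym)
qed

lemma dist_edge: "E u v \<Longrightarrow> d u v \<le> 1"
  using dist_le[of "[u,v]" u v] by simp

lemma dist_tri: "E i k \<Longrightarrow> d i j \<le> Suc (d k j)"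
proof -
  assume e: "E i k"
  obtain ys where ys: "is_walk E ys" "hd ys = k" "last ys = j" "length ys = Suc (d k j)" using dist_walk by blast
  have ne: "ys \<noteq> []" using ys(1) by auto
  then have "ys = hd ys # tl ys" by simp
  then have "is_walk E (i # ys)" using ys e by (metis walk_Cons2)
  then show ?thesis using dist_le[of "i # ys" i j] ys ne by simp
qed

lemma sep:
  assumes "E i k1" "E i k2" "k1 \<noteq> k2" "is_walk E ys" "hd ys = k1" "last ys = k2"
  shows "i \<in> set ys"
proof (rule ccontr)
  assume ni: "i \<notin> set ys"
  obtain zs where zs: "is_walk E zs" "distinct zs" "hd zs = k1" "last zs = k2" "set zs \<subseteq> set ys"
    using walk_short[OF assms(4)] assms by auto
  have zne: "zs \<noteq> []" using zs(1) by auto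
  have "length zs \<noteq> 1" using zs(3,4) assms(3) zne by (auto simp: length_Suc_conv)
  then have l2: "length zs \<ge> 2" using zne by (cases zs) (auto intro!: Suc_leI)
  have "zs = hd zs # tl zs" using zne by simp
  then have w: "is_walk E (i # zs)" using zs assms(1) by (metis walk_Cons2)
  have "is_cycle E (i # zs)" unfolding is_cycle_def
    using w zs ni l2 assms(2) sym by auto
  then show False using acyc by blast
qed

lemma nbr:
  assumes "i \<noteq> j"
  shows "\<exists>k0. E i k0 \<and> d k0 j + 1 = d i j \<and> (\<forall>k. E i k \<and> k \<noteq> k0 \<longrightarrow> d k j = d i j + 1)"
proof -
  define m where "m = d i j"
  have m0: "m \<noteq> 0" using dist_zero[of i j] assms m_def by auto
  obtain xs where xs: "is_walk E xs" "hd xs = i" "last xs = j" "length xs = Suc m"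
    using dist_walk m_def by blast
  obtain k0 rest where xr: "xs = i # k0 # rest" using xs m0
    by (cases xs; cases "tl xs") auto
  let ?L = "k0 # rest"
  have e0: "E i k0" and wL: "is_walk E ?L" using xs(1) xr by auto
  have lL: "last ?L = j" using xs(3) xr by simp
  have "d k0 j \<le> length ?L - 1" using dist_le[OF wL] lL by simp
  moreover have "m \<le> Suc (d k0 j)" using dist_tri[OF e0] m_def by simp
  moreover have "length ?L = m" using xs(4) xr by simp
  ultimately have dk0: "d k0 j + 1 = m" by simp
  have iL: "i \<notin> set ?L"
  proof
    assume "i \<in> set ?L"
    then obtain p where p: "p < length ?L" "?L ! p = i" by (meson in_set_conv_nth)
    have "is_walk E (drop p ?L)" using walk_drop[OF wL p(1)] .
    moreover have "hd (drop p ?L) = i" using p by (simp add: hd_drop_conv_nth)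
    moreover have "last (drop p ?L) = j" using p lL by (simp add: last_drop)
    ultimately have "d i j \<le> length (drop p ?L) - 1" by (rule dist_le)
    then show False using p(1) \<open>length ?L = m\<close> m_def by simp
  qed
  have others: "d k j = m + 1" if k: "E i k" "k \<noteq> k0" for k
  proof -
    have "d k j \<le> Suc m" using dist_tri[OF sym[OF k(1)]] m_def by simp
    moreover have "m + 1 \<le> d k j"
    proof -
      obtain ys where ys: "is_walk E ys" "hd ys = k" "last ys = j" "length ys = Suc (d k j)" using dist_walk by blast
      show ?thesis
      proof (cases "i \<in> set ys")
        case True
        then obtain p where p: "p < length ys" "ys ! p = i" by (meson in_set_conv_nth)
        have "p \<noteq> 0"
        proof
          assume "p = 0"
          then have "i = k" using p ys(2) ys(1) by (cases ys) auto
          then show False using irr k(1) by blast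
        qed
        have "is_walk E (drop p ys)" using walk_drop[OF ys(1) p(1)] .
        moreover have "hd (drop p ys) = i" using p by (simp add: hd_drop_conv_nth)
        moreover have "last (drop p ys) = j" using p ys(3) by (simp add: last_drop)
        ultimately have "d i j \<le> length (drop p ys) - 1" by (rule dist_le)
        then show ?thesis using m_def \<open>p \<noteq> 0\<close> ys(4) p(1) by simp
      next
        case False
        have wr: "is_walk E (rev ?L)" using walk_rev[OF _ wL] sym by blast
        let ?Z = "ys @ tl (rev ?L)"
        have hr: "hd (rev ?L) = j" by (metis hd_rev lL)
        have "is_walk E ?Z" by (rule walk_append_shared[OF ys(1) wr]) (simp only: ys(3) hr)
        moreover have "hd ?Z = k" using ys(1,2) by (cases ys) auto
        moreover have "last ?Z = k0"
        proof (cases rest)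
          case Nil then show ?thesis using ys(3) lL by simp
        next
          case (Cons a b)
          have "length (tl (rev ?L)) = Suc (length b)" using Cons by simp
          then have ne: "tl (rev ?L) \<noteq> []" by (metis Zero_neq_Suc list.size(3))
          have "last (ys @ tl (rev ?L)) = last (tl (rev ?L))" by (rule last_appendR[OF ne])
          also have "\<dots> = last (rev ?L)" using ne by (intro last_tl) blast
          also have "\<dots> = k0" by (simp only: last_rev list.sel(1))
          finally show ?thesis .
        qed
        ultimately have iZ: "i \<in> set ?Z" by (rule sep[OF k(1) e0 k(2)])
        have "set (tl (rev ?L)) \<subseteq> set (rev ?L)" by (cases "rev ?L") auto
        then have "i \<notin> set (tl (rev ?L))" using iL by auto
        then show ?thesis using False iZ by simp
      qed
    qed
    ultimately show ?thesis by simp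
  qed
  show ?thesis using e0 dk0 others unfolding m_def by blast
qed

end

lemma local_sum:
  fixes E :: "'a::finite \<Rightarrow> 'a \<Rightarrow> bool"
  assumes "tr E"
  shows "(\<Sum>k\<in>UNIV. if E i k then real (graph_dist E k j) else 0)
       = (\<Sum>k\<in>UNIV. if E i k then 1 else 0) * (real (graph_dist E i j) + 1) - 2 + (if i = j then 2 else 0)"
proof (cases "i = j")
  case True
  have "(if E i k then real (graph_dist E k j) else 0) = (if E i k then 1 else 0)" for k
  proof (cases "E i k")
    case e: True
    have "graph_dist E k i \<le> 1" using tr.dist_edge[OF assms tr.sym[OF assms e]] .
    moreover have "graph_dist E k i \<noteq> 0" using tr.dist_zero[OF assms] tr.irr[OF assms] e by blast
    ultimately have "graph_dist E k i = 1" by simp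
    then show ?thesis using e True by simp
  qed simp
  note eq = this
  have "(\<Sum>k\<in>UNIV. if E i k then real (graph_dist E k j) else 0) = (\<Sum>k\<in>UNIV. if E i k then 1 else 0)"
    by (intro sum.cong refl) (rule eq)
  then show ?thesis using True tr.dist_self[OF assms] by simp
next
  case False
  obtain k0 where k0: "E i k0" "graph_dist E k0 j + 1 = graph_dist E i j"
    "\<And>k. E i k \<Longrightarrow> k \<noteq> k0 \<Longrightarrow> graph_dist E k j = graph_dist E i j + 1"
    using tr.nbr[OF assms False] by blast
  have "(if E i k then real (graph_dist E k j) else 0)
     = (if E i k then 1 else 0) * (real (graph_dist E i j) + 1) - (if k = k0 then 2 else 0)" (is "?l k = ?r k") for k
  proof (cases "E i k")
    case True
    show ?thesis
    proof (cases "k = k0")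
      case True
      have "real (graph_dist E i j) = real (graph_dist E k0 j) + 1" using k0(2) by (metis of_nat_1 of_nat_add)
      then show ?thesis using True k0(1) by simp
    next
      case False then show ?thesis using k0(3)[OF \<open>E i k\<close>] \<open>E i k\<close> by simp
    qed
  next
    case f: False
    then have "k \<noteq> k0" using k0(1) by blast
    then show ?thesis using f by simp
  qed
  note that_eq = this
  have "(\<Sum>k\<in>UNIV. if E i k then real (graph_dist E k j) else 0)
     = (\<Sum>k\<in>UNIV. (if E i k then 1 else 0) * (real (graph_dist E i j) + 1) - (if k = k0 then 2 else 0))"
    by (intro sum.cong refl) (rule that_eq)
  also have "\<dots> = (\<Sum>k\<in>UNIV. if E i k then 1 else 0) * (real (graph_dist E i j) + 1) - 2"
    by (simp add: sum_subtractf sum_distrib_right)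
  finally show ?thesis using False by simp
qed

lemma cnd:
  fixes E :: "'a::finite \<Rightarrow> 'a \<Rightarrow> bool" and D :: "'a \<Rightarrow> 'a \<Rightarrow> real" and y :: "'a \<Rightarrow> real"
  assumes Dsym: "\<And>i j. D i j = D j i"
    and Esym: "\<And>i j. E i j \<Longrightarrow> E j i"
    and loc: "\<And>i j. (\<Sum>k\<in>UNIV. if E i k then D k j else 0)
       = (\<Sum>k\<in>UNIV. if E i k then 1 else 0) * (D i j + 1) - 2 + (if i = j then 2 else 0)"
    and y0: "(\<Sum>i\<in>UNIV. y i) = 0"
  shows "(\<Sum>i\<in>UNIV. \<Sum>j\<in>UNIV. y i * D i j * y j) \<le> 0"
    and "(\<Sum>i\<in>UNIV. \<Sum>j\<in>UNIV. y i * D i j * y j) = 0 \<Longrightarrow> \<forall>i. y i = 0"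
proof -
  define z where "z i = (\<Sum>j\<in>UNIV. D i j * y j)" for i
  define deg where "deg i = (\<Sum>k\<in>UNIV. if E i k then 1 else (0::real))" for i
  have one: "(\<Sum>k\<in>UNIV. if E i k then z k - z i else 0) = 2 * y i" for i
  proof -
    have "(\<Sum>k\<in>UNIV. if E i k then z k - z i else 0) = (\<Sum>k\<in>UNIV. if E i k then z k else 0) - deg i * z i"
    proof -
      have "(\<Sum>k\<in>UNIV. if E i k then z k - z i else 0) = (\<Sum>k\<in>UNIV. (if E i k then z k else 0) - (if E i k then 1 else 0) * z i)"
        by (intro sum.cong refl) simp
      then show ?thesis unfolding deg_def by (simp add: sum_subtractf sum_distrib_right)
    qed
    also have "(\<Sum>k\<in>UNIV. if E i k then z k else 0) = (\<Sum>k\<in>UNIV. \<Sum>j\<in>UNIV. (if E i k then D k j else 0) * y j)"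
      unfolding z_def by (intro sum.cong refl) auto
    also have "\<dots> = (\<Sum>j\<in>UNIV. (\<Sum>k\<in>UNIV. if E i k then D k j else 0) * y j)"
      by (subst sum.swap) (simp add: sum_distrib_right)
    also have "\<dots> = (\<Sum>j\<in>UNIV. (deg i * (D i j + 1) - 2 + (if i = j then 2 else 0)) * y j)"
      using loc unfolding deg_def by simp
    also have "\<dots> = deg i * z i + (deg i - 2) * (\<Sum>j\<in>UNIV. y j) + 2 * y i"
    proof -
      have h1: "(\<Sum>j\<in>UNIV. y j * (if i = j then 2 else 0)) = y i * 2"
        by (simp add: if_distrib[of "\<lambda>t. y _ * t"] cong: if_cong)
      have h2: "(\<Sum>j\<in>UNIV. y j * 2) = sum y UNIV * 2" by (simp add: sum_distrib_right)
      show ?thesis unfolding z_def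
        by (simp add: algebra_simps sum.distrib sum_subtractf sum_distrib_left h1 h2)
    qed
    finally show ?thesis using y0 by simp
  qed
  define G where "G = (\<Sum>i\<in>UNIV. \<Sum>k\<in>UNIV. if E i k then (z k - z i) * z i else 0)"
  define H where "H = (\<Sum>i\<in>UNIV. \<Sum>k\<in>UNIV. if E i k then (z k - z i)^2 else 0)"
  have yz: "(\<Sum>i\<in>UNIV. \<Sum>j\<in>UNIV. y i * D i j * y j) = (\<Sum>i\<in>UNIV. y i * z i)"
    unfolding z_def by (simp add: sum_distrib_left mult.assoc)
  also have "\<dots> = (\<Sum>i\<in>UNIV. (1/2) * (\<Sum>k\<in>UNIV. if E i k then z k - z i else 0) * z i)"
    using one by simp
  also have "\<dots> = (\<Sum>i\<in>UNIV. (\<Sum>k\<in>UNIV. if E i k then (z k - z i) * z i else 0) / 2)"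
  proof (intro sum.cong refl)
    fix i
    have "(\<Sum>k\<in>UNIV. if E i k then z k - z i else 0) * z i = (\<Sum>k\<in>UNIV. if E i k then (z k - z i) * z i else 0)"
      unfolding sum_distrib_right by (intro sum.cong refl) simp
    then show "1 / 2 * (\<Sum>k\<in>UNIV. if E i k then z k - z i else 0) * z i = (\<Sum>k\<in>UNIV. if E i k then (z k - z i) * z i else 0) / 2"
      by simp
  qed
  also have "\<dots> = G / 2" unfolding G_def by (rule sum_divide_distrib[symmetric])
  finally have yG: "(\<Sum>i\<in>UNIV. \<Sum>j\<in>UNIV. y i * D i j * y j) = G / 2" .
  have G2: "G = (\<Sum>i\<in>UNIV. \<Sum>k\<in>UNIV. if E i k then (z i - z k) * z k else 0)"
    unfolding G_def
    apply (subst sum.swap)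
    apply (rule sum.cong[OF refl])+
    by (metis Esym)
  have "2 * G = - H"
  proof -
    have "2 * G = (\<Sum>i\<in>UNIV. \<Sum>k\<in>UNIV. if E i k then (z k - z i) * z i else 0) + (\<Sum>i\<in>UNIV. \<Sum>k\<in>UNIV. if E i k then (z i - z k) * z k else 0)"
      using G2 unfolding G_def by linarith
    also have "\<dots> = (\<Sum>i\<in>UNIV. \<Sum>k\<in>UNIV. (if E i k then (z k - z i) * z i else 0) + (if E i k then (z i - z k) * z k else 0))"
      by (simp only: sum.distrib)
    also have "\<dots> = (\<Sum>i\<in>UNIV. \<Sum>k\<in>UNIV. if E i k then (z k - z i) * z i + (z i - z k) * z k else 0)"
      by (intro sum.cong refl) simp
    also have "\<dots> = - H" unfolding H_def
      by (simp only: sum_negf[symmetric] if_distrib[of uminus, symmetric]) (intro sum.cong refl, simp add: power2_eq_square algebra_simps)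
    finally show ?thesis .
  qed
  have Hnn: "H \<ge> 0" unfolding H_def by (intro sum_nonneg) auto
  show "(\<Sum>i\<in>UNIV. \<Sum>j\<in>UNIV. y i * D i j * y j) \<le> 0" using yG \<open>2 * G = - H\<close> Hnn by simp
  assume "(\<Sum>i\<in>UNIV. \<Sum>j\<in>UNIV. y i * D i j * y j) = 0"
  then have "H = 0" using yG \<open>2 * G = - H\<close> by simp
  then have "\<forall>i. (\<Sum>k\<in>UNIV. if E i k then (z k - z i)^2 else 0) = 0"
    unfolding H_def by (subst (asm) sum_nonneg_eq_0_iff) (auto intro: sum_nonneg)
  then have "\<forall>i k. E i k \<longrightarrow> z k = z i"
  proof (intro allI impI)
    fix i k assume e: "E i k"
    have "(\<Sum>k\<in>UNIV. if E i k then (z k - z i)^2 else 0) = 0" using \<open>\<forall>i. _\<close> by blast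
    then have "\<forall>k\<in>UNIV. (if E i k then (z k - z i)^2 else 0) = 0"
      by (subst (asm) sum_nonneg_eq_0_iff) auto
    then have "(z k - z i)^2 = 0" using e by (metis UNIV_I)
    then show "z k = z i" by simp
  qed
  note zz = this
  show "\<forall>i. y i = 0"
  proof
    fix i
    have "(\<Sum>k\<in>UNIV. if E i k then z k - z i else 0) = 0"
      by (rule sum.neutral) (simp add: zz)
    then show "y i = 0" using one[of i] by simp
  qed
qed

lemma quad_expand:
  fixes x :: "real^'n" and M B :: "real^'n^'n"
  shows "x \<bullet> ((M ** B) *v x) = (\<Sum>i\<in>UNIV. \<Sum>j\<in>UNIV. x$i * M$i$j * (\<Sum>k\<in>UNIV. B$j$k * x$k))"
proof -
  have "x \<bullet> ((M ** B) *v x) = (\<Sum>i\<in>UNIV. \<Sum>n\<in>UNIV. \<Sum>j\<in>UNIV. x$i * (M$i$j * (B$j$n * x$n)))"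
    by (simp add: inner_vec_def matrix_vector_mult_def matrix_matrix_mult_def sum_distrib_left sum_distrib_right mult.assoc)
  also have "\<dots> = (\<Sum>i\<in>UNIV. \<Sum>j\<in>UNIV. \<Sum>n\<in>UNIV. x$i * (M$i$j * (B$j$n * x$n)))"
    by (rule sum.cong[OF refl], rule sum.swap)
  finally show ?thesis by (simp add: sum_distrib_left mult.assoc)
qed

lemma Bx:
  fixes x :: "real^'n"
  shows "(\<Sum>k\<in>UNIV. (((c::real) *\<^sub>R all_ones - mat 1) :: real^'n^'n)$j$k * x$k) = c * (\<Sum>k\<in>UNIV. x$k) - x$j"
  by (simp add: all_ones_def mat_def left_diff_distrib sum_subtractf sum_distrib_left if_distrib[of "\<lambda>t. t * _"])

lemma alg:
  fixes x :: "'n::finite \<Rightarrow> real" and D :: "'n \<Rightarrow> 'n \<Rightarrow> real"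
  assumes Dsym: "\<And>i j. D i j = D j i"
  shows "(\<Sum>i\<in>UNIV. \<Sum>j\<in>UNIV. x i * D i j * (2 * a - x j)) = a^2 * (\<Sum>i\<in>UNIV. \<Sum>j\<in>UNIV. D i j) - (\<Sum>i\<in>UNIV. \<Sum>j\<in>UNIV. (x i - a) * D i j * (x j - a))"
proof -
  define y where "y i = x i - a" for i
  have xy: "x i = a + y i" for i unfolding y_def by simp
  have sw: "(\<Sum>i\<in>UNIV. \<Sum>j\<in>UNIV. D i j * y j) = (\<Sum>i\<in>UNIV. \<Sum>j\<in>UNIV. y i * D i j)"
    by (subst sum.swap) (simp add: Dsym mult.commute)
  have "(\<Sum>i\<in>UNIV. \<Sum>j\<in>UNIV. x i * D i j * (2 * a - x j)) = (\<Sum>i\<in>UNIV. \<Sum>j\<in>UNIV. (a + y i) * D i j * (a - y j))"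
    by (simp add: xy)
  also have "\<dots> = (\<Sum>i\<in>UNIV. \<Sum>j\<in>UNIV. a^2 * D i j - a * (D i j * y j) + a * (y i * D i j) - y i * D i j * y j)"
    by (rule sum.cong[OF refl])+ (simp add: algebra_simps power2_eq_square)
  also have "\<dots> = a^2 * (\<Sum>i\<in>UNIV. \<Sum>j\<in>UNIV. D i j) - a * (\<Sum>i\<in>UNIV. \<Sum>j\<in>UNIV. D i j * y j) + a * (\<Sum>i\<in>UNIV. \<Sum>j\<in>UNIV. y i * D i j) - (\<Sum>i\<in>UNIV. \<Sum>j\<in>UNIV. y i * D i j * y j)"
    by (simp add: sum.distrib sum_subtractf sum_distrib_left)
  finally show ?thesis using sw by (simp add: y_def)
qed

theorem mainTheorem12:
  fixes E :: "'n::finite \<Rightarrow> 'n \<Rightarrow> bool"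
  assumes "is_tree E" and "CARD('n) \<ge> 3"
  shows "\<forall>x :: real^'n. x \<noteq> 0 \<longrightarrow>
           x \<bullet> ((distance_matrix E ** ((2 / real CARD('n)) *\<^sub>R all_ones - mat 1)) *v x) > 0"
proof (intro allI impI)
  fix x :: "real^'n"
  assume x0: "x \<noteq> 0"
  have trE: "tr E" using assms(1) unfolding is_tree_def by (intro tr.intro) auto
  define n where "n = real CARD('n)"
  have npos: "n > 0" unfolding n_def by simp
  define s where "s = (\<Sum>i\<in>UNIV. x$i)"
  define a where "a = s / n"
  define D where "D i j = real (graph_dist E i j)" for i j
  define y where "y i = x$i - a" for i
  have Dsym: "D i j = D j i" for i j unfolding D_def using tr.dist_sym[OF trE] by simp
  have "x \<bullet> ((distance_matrix E ** ((2 / real CARD('n)) *\<^sub>R all_ones - mat 1)) *v x)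
      = (\<Sum>i\<in>UNIV. \<Sum>j\<in>UNIV. x$i * D i j * ((2 / n) * s - x$j))"
    unfolding quad_expand Bx by (simp add: distance_matrix_def D_def n_def s_def)
  also have "(2 / n) * s = 2 * a" unfolding a_def by simp
  also have "(\<Sum>i\<in>UNIV. \<Sum>j\<in>UNIV. x$i * D i j * (2 * a - x$j))
      = a^2 * (\<Sum>i\<in>UNIV. \<Sum>j\<in>UNIV. D i j) - (\<Sum>i\<in>UNIV. \<Sum>j\<in>UNIV. y i * D i j * y j)"
    unfolding y_def by (rule alg[of D "\<lambda>i. x$i", OF Dsym])
  finally have Q: "x \<bullet> ((distance_matrix E ** ((2 / real CARD('n)) *\<^sub>R all_ones - mat 1)) *v x)
      = a^2 * (\<Sum>i\<in>UNIV. \<Sum>j\<in>UNIV. D i j) - (\<Sum>i\<in>UNIV. \<Sum>j\<in>UNIV. y i * D i j * y j)" .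
  have y0: "(\<Sum>i\<in>UNIV. y i) = 0"
    unfolding y_def a_def using npos by (simp add: sum_subtractf s_def n_def)
  have loc: "(\<Sum>k\<in>UNIV. if E i k then D k j else 0)
       = (\<Sum>k\<in>UNIV. if E i k then 1 else 0) * (D i j + 1) - 2 + (if i = j then 2 else 0)" for i j
    unfolding D_def by (rule local_sum[OF trE])
  have Esym: "E i j \<Longrightarrow> E j i" for i j using tr.sym[OF trE] .
  note c = cnd[of D E y, OF Dsym Esym loc y0]
  obtain i :: 'n where True by blast
  obtain j :: 'n where ij: "j \<noteq> i"
  proof (rule ccontr)
    assume "\<not> thesis"
    then have "\<forall>j. j = i" using that by blast
    then have "(UNIV :: 'n set) = {i}" by auto
    then show False using assms(2) by (metis card.empty card_insert_disjoint empty_iff finite.emptyI numeral_le_one_iff One_nat_def semiring_norm(70))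
  qed
  have Dnn: "D p q \<ge> 0" for p q unfolding D_def by simp
  have "D i j > 0" unfolding D_def using tr.dist_zero[OF trE, of i j] ij by auto
  also have "D i j \<le> (\<Sum>q\<in>UNIV. D i q)" by (rule member_le_sum) (auto simp: Dnn)
  also have "\<dots> \<le> (\<Sum>p\<in>UNIV. \<Sum>q\<in>UNIV. D p q)"
    by (rule member_le_sum[of i UNIV "\<lambda>p. \<Sum>q\<in>UNIV. D p q"]) (auto intro: sum_nonneg simp: Dnn)
  finally have Spos: "(\<Sum>p\<in>UNIV. \<Sum>q\<in>UNIV. D p q) > 0" .
  show "x \<bullet> ((distance_matrix E ** ((2 / real CARD('n)) *\<^sub>R all_ones - mat 1)) *v x) > 0"
  proof (cases "a = 0")
    case True
    then have yx: "y p = x$p" for p unfolding y_def by simp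
    obtain p where "x$p \<noteq> 0" using x0 by (metis vec_eq_iff zero_index)
    then have "(\<Sum>i\<in>UNIV. \<Sum>j\<in>UNIV. y i * D i j * y j) \<noteq> 0" using c(2) yx by metis
    then have "(\<Sum>i\<in>UNIV. \<Sum>j\<in>UNIV. y i * D i j * y j) < 0" using c(1) by linarith
    then show ?thesis unfolding Q using True by simp
  next
    case False
    then have "a^2 * (\<Sum>p\<in>UNIV. \<Sum>q\<in>UNIV. D p q) > 0" using Spos by simp
    then show ?thesis unfolding Q using c(1) by linarith
  qed
qed

end
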